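(* Let $G$ be a maximal $3$-$\gamma_{c}$-vertex critical graph, let $I$ be a maximum independent set of $G$, and let $W$ be a vertex set inducing a maximum complete subgraph of $G$ such that $|I\cap W|$ is minimum. For every $w\in W$ and every minimum connected dominating set $D_{w}$ of $G-w$, we have $|D_{w}\cap W|=0$ and $|D_{w}\cap I|\leq 1$.
   Context: All graphs are finite, simple and connected. A set $D\subseteq V(G)$ is a connected dominating set of $G$ if every vertex of $G$ is in $D$ or adjacent to a vertex of $D$, and $G[D]$ is connected; $\gamma_{c}(G)$ is the minimum cardinality of such a set. $G$ is $k$-$\gamma_{c}$-edge critical if $\gamma_{c}(G)=k$ and $\gamma_{c}(G+uv)<k$ for every pair of non-adjacent vertices $u,v$. A $2$-connected graph $G$ is $k$-$\gamma_{c}$-vertex critical if $\gamma_{c}(G)=k$ and $\gamma_{c}(G-v)<k$ for every $v\in V(G)$. $G$ is maximal $k$-$\gamma_{c}$-vertex critical if it is both $k$-$\gamma_{c}$-edge critical and $k$-$\gamma_{c}$-vertex critical. *)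

theory Defs
  imports Main
begin

definition graph :: "'a set \<Rightarrow> ('a \<Rightarrow> 'a \<Rightarrow> bool) \<Rightarrow> bool" where
  "graph V E \<longleftrightarrow> finite V \<and> (\<forall>x y. E x y \<longrightarrow> x \<in> V \<and> y \<in> V)
     \<and> (\<forall>x y. E x y \<longrightarrow> E y x) \<and> (\<forall>x. \<not> E x x)"

definition connected_set :: "('a \<Rightarrow> 'a \<Rightarrow> bool) \<Rightarrow> 'a set \<Rightarrow> bool" where
  "connected_set E S \<longleftrightarrow> S \<noteq> {} \<and>
     (\<forall>x\<in>S. \<forall>y\<in>S. (\<lambda>a b. E a b \<and> a \<in> S \<and> b \<in> S)\<^sup>*\<^sup>* x y)"

definition connected_graph :: "'a set \<Rightarrow> ('a \<Rightarrow> 'a \<Rightarrow> bool) \<Rightarrow> bool" where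
  "connected_graph V E \<longleftrightarrow> graph V E \<and> connected_set E V"

definition del_vertex :: "('a \<Rightarrow> 'a \<Rightarrow> bool) \<Rightarrow> 'a \<Rightarrow> ('a \<Rightarrow> 'a \<Rightarrow> bool)" where
  "del_vertex E v = (\<lambda>x y. E x y \<and> x \<noteq> v \<and> y \<noteq> v)"

definition add_edge :: "('a \<Rightarrow> 'a \<Rightarrow> bool) \<Rightarrow> 'a \<Rightarrow> 'a \<Rightarrow> ('a \<Rightarrow> 'a \<Rightarrow> bool)" where
  "add_edge E u v = (\<lambda>x y. E x y \<or> (x = u \<and> y = v) \<or> (x = v \<and> y = u))"

definition two_connected :: "'a set \<Rightarrow> ('a \<Rightarrow> 'a \<Rightarrow> bool) \<Rightarrow> bool" where
  "two_connected V E \<longleftrightarrow> connected_graph V E \<and> card V \<ge> 3 \<and>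
     (\<forall>v\<in>V. connected_graph (V - {v}) (del_vertex E v))"

definition dominating :: "'a set \<Rightarrow> ('a \<Rightarrow> 'a \<Rightarrow> bool) \<Rightarrow> 'a set \<Rightarrow> bool" where
  "dominating V E D \<longleftrightarrow> D \<subseteq> V \<and> (\<forall>x\<in>V. x \<in> D \<or> (\<exists>d\<in>D. E x d))"

definition cds :: "'a set \<Rightarrow> ('a \<Rightarrow> 'a \<Rightarrow> bool) \<Rightarrow> 'a set \<Rightarrow> bool" where
  "cds V E D \<longleftrightarrow> dominating V E D \<and> connected_set E D"

definition gamma_c :: "'a set \<Rightarrow> ('a \<Rightarrow> 'a \<Rightarrow> bool) \<Rightarrow> nat" where
  "gamma_c V E = Min {card D | D. cds V E D}"

definition min_cds :: "'a set \<Rightarrow> ('a \<Rightarrow> 'a \<Rightarrow> bool) \<Rightarrow> 'a set \<Rightarrow> bool" where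
  "min_cds V E D \<longleftrightarrow> cds V E D \<and> card D = gamma_c V E"

definition edge_critical :: "nat \<Rightarrow> 'a set \<Rightarrow> ('a \<Rightarrow> 'a \<Rightarrow> bool) \<Rightarrow> bool" where
  "edge_critical k V E \<longleftrightarrow> connected_graph V E \<and> gamma_c V E = k \<and>
     (\<forall>u\<in>V. \<forall>v\<in>V. u \<noteq> v \<and> \<not> E u v \<longrightarrow> gamma_c V (add_edge E u v) < k)"

definition vertex_critical :: "nat \<Rightarrow> 'a set \<Rightarrow> ('a \<Rightarrow> 'a \<Rightarrow> bool) \<Rightarrow> bool" where
  "vertex_critical k V E \<longleftrightarrow> two_connected V E \<and> gamma_c V E = k \<and>
     (\<forall>v\<in>V. gamma_c (V - {v}) (del_vertex E v) < k)"

definition maximal_vertex_critical :: "nat \<Rightarrow> 'a set \<Rightarrow> ('a \<Rightarrow> 'a \<Rightarrow> bool) \<Rightarrow> bool" where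
  "maximal_vertex_critical k V E \<longleftrightarrow> edge_critical k V E \<and> vertex_critical k V E"

definition independent :: "'a set \<Rightarrow> ('a \<Rightarrow> 'a \<Rightarrow> bool) \<Rightarrow> 'a set \<Rightarrow> bool" where
  "independent V E I \<longleftrightarrow> I \<subseteq> V \<and> (\<forall>x\<in>I. \<forall>y\<in>I. \<not> E x y)"

definition max_independent :: "'a set \<Rightarrow> ('a \<Rightarrow> 'a \<Rightarrow> bool) \<Rightarrow> 'a set \<Rightarrow> bool" where
  "max_independent V E I \<longleftrightarrow> independent V E I \<and>
     (\<forall>J. independent V E J \<longrightarrow> card J \<le> card I)"

definition clique :: "'a set \<Rightarrow> ('a \<Rightarrow> 'a \<Rightarrow> bool) \<Rightarrow> 'a set \<Rightarrow> bool" where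
  "clique V E W \<longleftrightarrow> W \<subseteq> V \<and> (\<forall>x\<in>W. \<forall>y\<in>W. x \<noteq> y \<longrightarrow> E x y)"

definition max_clique :: "'a set \<Rightarrow> ('a \<Rightarrow> 'a \<Rightarrow> bool) \<Rightarrow> 'a set \<Rightarrow> bool" where
  "max_clique V E W \<longleftrightarrow> clique V E W \<and> (\<forall>X. clique V E X \<longrightarrow> card X \<le> card W)"

end

theory Submission
  imports Defs
begin

lemma conn_mono:
  assumes "connected_set E' S" and "\<And>x y. E' x y \<Longrightarrow> E x y"
  shows "connected_set E S"
proof -
  have "(\<lambda>a b. E' a b \<and> a \<in> S \<and> b \<in> S) \<le> (\<lambda>a b. E a b \<and> a \<in> S \<and> b \<in> S)"
    using assms(2) by auto
  then show ?thesis using assms(1) unfolding connected_set_def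
    by (meson rtranclp_mono predicate2D)
qed

lemma indep_conn:
  assumes "connected_set E' S" and "\<And>x y. E' x y \<Longrightarrow> E x y"
    and "\<forall>x\<in>S. \<forall>y\<in>S. \<not> E x y" and "x \<in> S" "y \<in> S"
  shows "x = y"
proof -
  have "(\<lambda>a b. E' a b \<and> a \<in> S \<and> b \<in> S)\<^sup>*\<^sup>* x y"
    using assms(1,4,5) unfolding connected_set_def by blast
  then show ?thesis
    by (cases rule: converse_rtranclpE) (use assms(2,3) in blast)+
qed

theorem lemma3p4:
  fixes V :: "'a set" and E :: "'a \<Rightarrow> 'a \<Rightarrow> bool" and I W :: "'a set"
  assumes "maximal_vertex_critical 3 V E"
    and "max_independent V E I"
    and "max_clique V E W"
    and "\<forall>X. max_clique V E X \<longrightarrow> card (I \<inter> W) \<le> card (I \<inter> X)"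
  shows "\<forall>w\<in>W. \<forall>D. min_cds (V - {w}) (del_vertex E w) D \<longrightarrow>
           card (D \<inter> W) = 0 \<and> card (D \<inter> I) \<le> 1"
proof (intro ballI allI impI)
  fix w D
  assume wW: "w \<in> W" and md: "min_cds (V - {w}) (del_vertex E w) D"
  have vc: "vertex_critical 3 V E" and ec: "edge_critical 3 V E"
    using assms(1) maximal_vertex_critical_def by auto
  have gr: "graph V E" using ec unfolding edge_critical_def connected_graph_def by auto
  have finV: "finite V" using gr graph_def by auto
  have wV: "w \<in> V" using wW assms(3) unfolding max_clique_def clique_def by auto
  have g3: "gamma_c V E = 3" using vc vertex_critical_def by auto
  have cD: "card D < 3" using vc wV md unfolding vertex_critical_def min_cds_def by auto
  have cdsD: "cds (V - {w}) (del_vertex E w) D" using md min_cds_def by auto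
  have DV: "D \<subseteq> V - {w}" using cdsD unfolding cds_def dominating_def by auto
  have finD: "finite D" using DV finV finite_subset by blast
  have de: "\<And>x y. del_vertex E w x y \<Longrightarrow> E x y" unfolding del_vertex_def by auto
  have conD: "connected_set (del_vertex E w) D" using cdsD cds_def by auto
  have part1: "D \<inter> W = {}"
  proof (rule ccontr)
    assume "D \<inter> W \<noteq> {}"
    then obtain a where aD: "a \<in> D" and aW: "a \<in> W" by auto
    have "a \<noteq> w" using aD DV by auto
    then have Eaw: "E w a" using aW wW assms(3) unfolding max_clique_def clique_def by auto
    have "cds V E D"
      unfolding cds_def dominating_def
    proof (intro conjI ballI)
      show "D \<subseteq> V" using DV by auto
      show "connected_set E D" using conn_mono[OF conD de] .
    next
      fix x assume xV: "x \<in> V"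
      show "x \<in> D \<or> (\<exists>d\<in>D. E x d)"
      proof (cases "x = w")
        case True then show ?thesis using Eaw aD by auto
      next
        case False
        then have "x \<in> D \<or> (\<exists>d\<in>D. del_vertex E w x d)"
          using cdsD xV unfolding cds_def dominating_def by auto
        then show ?thesis using de by blast
      qed
    qed
    moreover have "finite {card D | D. cds V E D}"
    proof (rule finite_subset[of _ "{0..card V}"])
      show "{card D | D. cds V E D} \<subseteq> {0..card V}"
        using finV by (auto simp: cds_def dominating_def card_mono)
    qed auto
    ultimately have "gamma_c V E \<le> card D" unfolding gamma_c_def
      by (intro Min_le) auto
    then show False using g3 cD by auto
  qed
  have fDI: "finite (D \<inter> I)" using finD by auto
  have allEq: "\<forall>x\<in>D \<inter> I. \<forall>y\<in>D \<inter> I. x = y"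
    proof (intro ballI)
      fix x y assume x: "x \<in> D \<inter> I" and y: "y \<in> D \<inter> I"
      show "x = y"
      proof (rule ccontr)
        assume "x \<noteq> y"
        have "finite D" by (rule finD)
        have "D \<subseteq> I \<or> True" by simp
        have sub: "{x, y} \<subseteq> D" using x y by auto
        have "card {x,y} = 2" using \<open>x \<noteq> y\<close> by auto
        then have "card D \<ge> 2" using card_mono[OF finD sub] by auto
        then have "D = {x, y}" using card_subset_eq[OF finD sub] cD \<open>card {x, y} = 2\<close>
        proof -
          have "card D = 2" using \<open>card D \<ge> 2\<close> cD by simp
          then show ?thesis using card_subset_eq[OF finD sub] \<open>card {x, y} = 2\<close> by simp
        qed
        then have "\<forall>a\<in>D. \<forall>b\<in>D. \<not> E a b"
          using x y assms(2) unfolding max_independent_def independent_def by auto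
        then show False using indep_conn[of "del_vertex E w" D E, OF conD de] x y \<open>x \<noteq> y\<close> by blast
      qed
    qed
  have "card (D \<inter> I) \<le> 1" using card_le_Suc0_iff_eq[OF fDI] allEq by simp
  then show "card (D \<inter> W) = 0 \<and> card (D \<inter> I) \<le> 1" using part1 by auto
qed

end
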